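(* Let $n\in\mathbb N$, $p\in[1,\infty)$, $\Omega=[0,1]^n$, let $X,Y$ be complex Banach spaces, let $\mathcal B$ be a non-empty collection of subsets of $X$ covering $X$, and let $\emptyset\neq\Lambda\subseteq\mathbb R^n$ with $\Lambda+l\Omega\subseteq\Lambda$ for all $l>0$. Let $F:\Lambda\times X\to Y$ satisfy condition (L). Then $F$ is Weyl $p$-bounded on $\mathcal B$ if and only if $F$ is Stepanov $p$-bounded on $\mathcal B$.
   Context: Condition (L): for all $\mathbf t\in\Lambda$, $x\in X$ and $l>0$, the function $\mathbf u\mapsto\|F(\mathbf t+\mathbf u;x)\|_Y$ belongs to $L^p(l\Omega)$. For $B\in\mathcal B$ and $l>0$ let $D^p_{S_{l\Omega},B}(F,0)=\sup_{x\in B}\sup_{\mathbf t\in\Lambda}l^{-n/p}\|F(\mathbf t+\cdot;x)\|_{L^p(l\Omega:Y)}$; the limit $\|F\|^p_{W,B}:=\lim_{l\to\infty}D^p_{S_{l\Omega},B}(F,0)\in[0,\infty]$ exists (the Weyl $p$-norm of $F$ on $B$). $F$ is Weyl $p$-bounded on $\mathcal B$ if $\|F\|^p_{W,B}<\infty$ for each $B\in\mathcal B$. $F$ is Stepanov $p$-bounded on $\mathcal B$ if $\sup_{\mathbf t\in\Lambda,x\in B}\|F(\mathbf t+\cdot;x)\|_{L^p(\Omega:Y)}<\infty$ for each $B\in\mathcal B$. *)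

theory Defs
  imports "HOL-Analysis.Analysis"
begin

definition unit_cube :: "(real^'n) set" where
  "unit_cube = cbox 0 One"

definition scaled_cube :: "real \<Rightarrow> (real^'n) set" where
  "scaled_cube l = (\<lambda>u. l *\<^sub>R u) ` unit_cube"

definition Lp_on :: "real \<Rightarrow> (real^'n) set \<Rightarrow> (real^'n \<Rightarrow> real) \<Rightarrow> bool" where
  "Lp_on p S g \<longleftrightarrow> g \<in> borel_measurable (lebesgue_on S)
      \<and> integrable (lebesgue_on S) (\<lambda>u. \<bar>g u\<bar> powr p)"

definition Lp_norm :: "real \<Rightarrow> (real^'n) set \<Rightarrow> (real^'n \<Rightarrow> 'y::real_normed_vector) \<Rightarrow> real" where
  "Lp_norm p S f = (LINT u|lebesgue_on S. norm (f u) powr p) powr (1 / p)"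

definition cond_L :: "real \<Rightarrow> (real^'n) set \<Rightarrow> (real^'n \<Rightarrow> 'x \<Rightarrow> 'y::real_normed_vector) \<Rightarrow> bool" where
  "cond_L p \<Lambda> F \<longleftrightarrow> (\<forall>t\<in>\<Lambda>. \<forall>x. \<forall>l>0.
      Lp_on p (scaled_cube l) (\<lambda>u. norm (F (t + u) x)))"

definition D_weyl :: "real \<Rightarrow> (real^'n) set \<Rightarrow> (real^'n \<Rightarrow> 'x \<Rightarrow> 'y::real_normed_vector)
      \<Rightarrow> 'x set \<Rightarrow> real \<Rightarrow> ennreal" where
  "D_weyl p \<Lambda> F B l = (SUP x\<in>B. SUP t\<in>\<Lambda>.
      ennreal (l powr (- real CARD('n) / p) * Lp_norm p (scaled_cube l) (\<lambda>u. F (t + u) x)))"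

definition weyl_norm :: "real \<Rightarrow> (real^'n) set \<Rightarrow> (real^'n \<Rightarrow> 'x \<Rightarrow> 'y::real_normed_vector)
      \<Rightarrow> 'x set \<Rightarrow> ennreal" where
  "weyl_norm p \<Lambda> F B = Lim at_top (D_weyl p \<Lambda> F B)"

definition weyl_bounded :: "real \<Rightarrow> (real^'n) set \<Rightarrow> (real^'n \<Rightarrow> 'x \<Rightarrow> 'y::real_normed_vector)
      \<Rightarrow> 'x set set \<Rightarrow> bool" where
  "weyl_bounded p \<Lambda> F \<B> \<longleftrightarrow> (\<forall>B\<in>\<B>. weyl_norm p \<Lambda> F B < \<infinity>)"

definition stepanov_bounded :: "real \<Rightarrow> (real^'n) set \<Rightarrow> (real^'n \<Rightarrow> 'x \<Rightarrow> 'y::real_normed_vector)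
      \<Rightarrow> 'x set set \<Rightarrow> bool" where
  "stepanov_bounded p \<Lambda> F \<B> \<longleftrightarrow> (\<forall>B\<in>\<B>.
      (SUP t\<in>\<Lambda>. SUP x\<in>B. ennreal (Lp_norm p unit_cube (\<lambda>u. F (t + u) x))) < \<infinity>)"

end

theory Submission
  imports Defs
begin
lemma One_cart_nth[simp]: "(One :: real^'n) $ i = 1"
proof -
  have "axis i (1::real) \<in> (Basis :: (real^'n) set)" by (simp add: Basis_vec_def) blast
  then show ?thesis by (metis cart_eq_inner_axis inner_sum_Basis)
qed

lemma One_cart_nth'[simp]: "(\<Sum>x\<in>(Basis :: (real^'n) set). x $ i) = 1"
  using One_cart_nth[where 'n='n, of i] by (simp add: sum_component)

lemma scaled_cube_eq:
  assumes "l > 0" shows "scaled_cube l = (cbox 0 (l *\<^sub>R One) :: (real^'n) set)"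
proof -
  have "(0::real^'n) \<in> cbox 0 One" by (simp add: mem_box_cart)
  then show ?thesis using assms unfolding scaled_cube_def unit_cube_def
    by (subst image_smult_cbox) auto
qed

lemma scaled_cube_1: "scaled_cube 1 = unit_cube"
  unfolding scaled_cube_def by simp

lemma cbox_lebesgue: "cbox a b \<in> sets lebesgue"
  by (simp add: fmeasurableD)

lemma covering:
  fixes g :: "real^'n \<Rightarrow> real"
  assumes g0: "\<And>u. 0 \<le> g u" and l: "l > 0" and k: "k \<ge> 1" and L: "L > 0" "L \<le> real k * l"
    and int: "g integrable_on cbox 0 ((real k * l) *\<^sub>R One)"
  shows "integral (cbox 0 (L *\<^sub>R One)) g \<le>
    (\<Sum>f\<in>PiE UNIV (\<lambda>_. {..<k}). integral (cbox 0 (l *\<^sub>R One)) (\<lambda>v. g (l *\<^sub>R (\<chi> i. real (f i)) + v)))"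
proof -
  define C where "C = cbox 0 ((real k * l) *\<^sub>R One :: real^'n)"
  define c where "c f = (l *\<^sub>R (\<chi> i. real (f i)) :: real^'n)" for f :: "'n \<Rightarrow> nat"
  define Cf where "Cf f = cbox (c f) (c f + l *\<^sub>R One)" for f
  let ?P = "PiE UNIV (\<lambda>_::'n. {..<k})"
  have sub: "Cf f \<subseteq> C" if "f \<in> ?P" for f
  proof
    fix u assume "u \<in> Cf f"
    then have u: "\<And>i. l * real (f i) \<le> u $ i \<and> u $ i \<le> l * real (f i) + l"
      unfolding Cf_def c_def mem_box_cart by simp
    have "f i < k" for i using that by auto
    then have "real (f i) + 1 \<le> real k" for i
      by (metis Suc_leI of_nat_Suc of_nat_le_iff add.commute)
    then have "l * real (f i) + l \<le> real k * l" for i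
      using l by (metis distrib_left mult.commute mult.right_neutral mult_left_mono less_imp_le)
    then show "u \<in> C" unfolding C_def mem_box_cart using u l
      by (auto intro: order_trans[OF _ u[THEN conjunct1]] order_trans[OF u[THEN conjunct2]])
  qed
  have intC: "g integrable_on C" using int C_def by simp
  have intf: "g integrable_on Cf f" if "f \<in> ?P" for f
    using integrable_on_subcbox[OF intC[unfolded C_def]] sub[OF that] unfolding Cf_def C_def
    by metis
  have "integral (cbox 0 (L *\<^sub>R One)) g \<le> integral C g"
  proof (rule integral_subset_le)
    show "cbox 0 (L *\<^sub>R One) \<subseteq> C" unfolding C_def using L
      by (auto simp: mem_box_cart) (meson order_trans)
    then show "g integrable_on cbox 0 (L *\<^sub>R One)" using intC unfolding C_def
      by (metis integrable_on_subcbox)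
  qed (use intC g0 in auto)
  also have "\<dots> = integral UNIV (\<lambda>u. if u \<in> C then g u else 0)"
    by (simp add: integral_restrict_UNIV)
  also have "\<dots> \<le> integral UNIV (\<lambda>u. \<Sum>f\<in>?P. if u \<in> Cf f then g u else 0)"
  proof (rule integral_le)
    show "(\<lambda>u. if u \<in> C then g u else 0) integrable_on UNIV"
      using intC integrable_restrict_UNIV by blast
    show "(\<lambda>u. \<Sum>f\<in>?P. if u \<in> Cf f then g u else 0) integrable_on UNIV"
      by (rule integrable_sum) (auto simp: integrable_restrict_UNIV intf finite_PiE)
    fix u show "(if u \<in> C then g u else 0) \<le> (\<Sum>f\<in>?P. if u \<in> Cf f then g u else 0)"
    proof (cases "u \<in> C")
      case False then show ?thesis using g0 by (auto intro: sum_nonneg)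
    next
      case True
      then have u: "\<And>i. 0 \<le> u $ i \<and> u $ i \<le> real k * l" unfolding C_def mem_box_cart by auto
      define f where "f i = min (k - 1) (nat \<lfloor>u $ i / l\<rfloor>)" for i
      have fP: "f \<in> ?P" unfolding f_def using k by auto
      have "l * real (f i) \<le> u $ i \<and> u $ i \<le> l * real (f i) + l" for i
      proof (cases "nat \<lfloor>u $ i / l\<rfloor> < k")
        case True
        then have fi: "real (f i) = \<lfloor>u $ i / l\<rfloor>" unfolding f_def using u[of i] l by auto
        have a: "\<lfloor>u $ i / l\<rfloor> \<le> u $ i / l" and b: "u $ i / l < \<lfloor>u $ i / l\<rfloor> + 1" by linarith+
        from a have "l * \<lfloor>u $ i / l\<rfloor> \<le> u $ i"
          using l pos_le_divide_eq[OF l] by (metis mult.commute)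
        moreover from b have "u $ i < l * (\<lfloor>u $ i / l\<rfloor> + 1)"
          using l pos_divide_less_eq[OF l] by (metis mult.commute)
        ultimately have "l * \<lfloor>u $ i / l\<rfloor> \<le> u $ i" "u $ i < l * (\<lfloor>u $ i / l\<rfloor> + 1)" by auto
        then show ?thesis unfolding fi by (simp add: algebra_simps)
      next
        case False
        then have "k \<le> nat \<lfloor>u $ i / l\<rfloor>" by simp
        then have "int k \<le> \<lfloor>u $ i / l\<rfloor>" using k by (cases "\<lfloor>u $ i / l\<rfloor> \<ge> 0") (auto simp: le_nat_iff)
        then have "u $ i / l \<ge> real k" by linarith
        then have ui: "u $ i = real k * l" using u[of i] l by (auto simp: field_simps)
        have fi: "real (f i) = real k - 1" unfolding f_def using False k by auto
        show ?thesis unfolding fi ui using l by (auto simp: algebra_simps)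
      qed
      then have "u \<in> Cf f" unfolding Cf_def c_def mem_box_cart by simp
      then have "(if u \<in> C then g u else 0) \<le> (if u \<in> Cf f then g u else 0)" using g0 by simp
      also have "\<dots> \<le> (\<Sum>f\<in>?P. if u \<in> Cf f then g u else 0)"
        by (rule member_le_sum) (use fP g0 in \<open>auto simp: finite_PiE\<close>)
      finally show ?thesis .
    qed
  qed
  also have "\<dots> = (\<Sum>f\<in>?P. integral (Cf f) g)"
    by (subst integral_sum) (auto simp: integrable_restrict_UNIV intf finite_PiE integral_restrict_UNIV)
  also have "\<dots> = (\<Sum>f\<in>?P. integral (cbox 0 (l *\<^sub>R One)) (\<lambda>v. g (c f + v)))"
  proof (rule sum.cong[OF refl])
    fix f assume "f \<in> ?P"
    then have "(g has_integral integral (Cf f) g) (cbox (c f) (c f + l *\<^sub>R One))"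
      using intf Cf_def by auto
    from has_integral_affinity'[OF this, of 1 "c f"]
    have "((\<lambda>x. g (x + c f)) has_integral integral (Cf f) g) (cbox 0 (l *\<^sub>R One))" by simp
    then show "integral (Cf f) g = integral (cbox 0 (l *\<^sub>R One)) (\<lambda>v. g (c f + v))"
      by (simp add: add.commute integral_unique)
  qed
  finally show ?thesis unfolding c_def .
qed


lemma Q_eq:
  fixes F :: "real^'n \<Rightarrow> 'x \<Rightarrow> 'y::real_normed_vector"
  assumes cL: "cond_L p \<Lambda> F" and t: "t \<in> \<Lambda>" and l: "l > 0"
  shows "(LINT u|lebesgue_on (scaled_cube l). norm (F (t + u) x) powr p)
           = integral (cbox 0 (l *\<^sub>R One)) (\<lambda>u. norm (F (t + u) x) powr p)"
    and "(\<lambda>u. norm (F (t + u) x) powr p) integrable_on cbox 0 (l *\<^sub>R One)"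
proof -
  have "Lp_on p (scaled_cube l) (\<lambda>u. norm (F (t + u) x))" using cL t l unfolding cond_L_def by blast
  then have i: "integrable (lebesgue_on (cbox 0 (l *\<^sub>R One))) (\<lambda>u. norm (F (t + u) x) powr p)"
    unfolding Lp_on_def scaled_cube_eq[OF l] by simp
  show "(LINT u|lebesgue_on (scaled_cube l). norm (F (t + u) x) powr p)
           = integral (cbox 0 (l *\<^sub>R One)) (\<lambda>u. norm (F (t + u) x) powr p)"
    unfolding scaled_cube_eq[OF l] by (rule lebesgue_integral_eq_integral[OF i cbox_lebesgue])
  show "(\<lambda>u. norm (F (t + u) x) powr p) integrable_on cbox 0 (l *\<^sub>R One)"
    by (rule integrable_on_lebesgue_on[OF i cbox_lebesgue])
qed

lemma D_bound:
  fixes F :: "real^'n \<Rightarrow> 'x \<Rightarrow> 'y::real_normed_vector"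
  assumes p: "p \<ge> 1" and \<Lambda>: "\<forall>l>0. \<forall>t\<in>\<Lambda>. \<forall>u\<in>scaled_cube l. t + u \<in> \<Lambda>"
    and cL: "cond_L p \<Lambda> F" and l: "l > 0" and L: "L > 0" and k: "k \<ge> 1" "L \<le> real k * l"
  shows "D_weyl p \<Lambda> F B L \<le> ennreal ((real k * l / L) powr (real CARD('n) / p)) * D_weyl p \<Lambda> F B l"
proof -
  define N where "N = real CARD('n)"
  define Q where "Q t x l = (LINT u|lebesgue_on (scaled_cube l). norm (F (t + u) x) powr p)" for t x l
  have Lp: "Lp_norm p (scaled_cube l) (\<lambda>u. F (t + u) x) = Q t x l powr (1/p)" for t x l
    unfolding Lp_norm_def Q_def by simp
  have Q0: "Q t x l \<ge> 0" for t x l unfolding Q_def by (rule integral_nonneg_AE) simp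
  have kl: "real k * l > 0" using k l by simp
  show ?thesis
    unfolding D_weyl_def[of p \<Lambda> F B L]
  proof (intro SUP_least)
    fix x t assume x: "x \<in> B" and t: "t \<in> \<Lambda>"
    show "ennreal (L powr (- real CARD('n) / p) * Lp_norm p (scaled_cube L) (\<lambda>u. F (t + u) x))
          \<le> ennreal ((real k * l / L) powr (real CARD('n) / p)) * D_weyl p \<Lambda> F B l"
    proof (cases "D_weyl p \<Lambda> F B l")
      case top
      have "(real k * l / L) powr (real CARD('n) / p) > 0" using kl L k l by simp
      then show ?thesis using top by (simp add: ennreal_mult_top)
    next
      case (real d)
      then have d0: "d \<ge> 0" by simp
      have Qs: "Q s x l \<le> (l powr (N/p) * d) powr p" if s: "s \<in> \<Lambda>" for s
      proof -
        have "ennreal (l powr (- N / p) * Q s x l powr (1/p)) \<le> D_weyl p \<Lambda> F B l"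
          unfolding D_weyl_def N_def Lp[symmetric]
          by (rule SUP_upper2[OF x], rule SUP_upper2[OF s]) simp
        then have "l powr (- N / p) * Q s x l powr (1/p) \<le> d"
          using real d0 by (simp add: ennreal_le_iff)
        then have "Q s x l powr (1/p) \<le> l powr (N/p) * d"
          using l by (simp add: powr_minus field_simps)
        then have "(Q s x l powr (1/p)) powr p \<le> (l powr (N/p) * d) powr p"
          using p by (intro powr_mono2) auto
        then show ?thesis using p Q0[of s x l] by (simp add: powr_powr)
      qed
      define M where "M = (l powr (N/p) * d) powr p"
      have M0: "M \<ge> 0" unfolding M_def by simp
      define g where "g = (\<lambda>u. norm (F (t + u) x) powr p)"
      let ?P = "PiE UNIV (\<lambda>_::'n. {..<k})"
      have "Q t x L = integral (cbox 0 (L *\<^sub>R One)) g"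
        unfolding Q_def g_def using Q_eq[OF cL t L] by simp
      also have "\<dots> \<le> (\<Sum>f\<in>?P. integral (cbox 0 (l *\<^sub>R One)) (\<lambda>v. g (l *\<^sub>R (\<chi> i. real (f i)) + v)))"
        by (rule covering[OF _ l k(1) L k(2)]) (use Q_eq(2)[OF cL t kl] in \<open>auto simp: g_def\<close>)
      also have "\<dots> \<le> (\<Sum>f\<in>?P. M)"
      proof (rule sum_mono)
        fix f assume f: "f \<in> ?P"
        define s where "s = t + l *\<^sub>R (\<chi> i. real (f i))"
        have "l *\<^sub>R (\<chi> i. real (f i)) \<in> scaled_cube (real k * l)"
        proof -
          have "real (f i) \<le> real k" for i using f by (auto simp: PiE_iff less_imp_le)
          then have "l * real (f i) \<le> real k * l" for i using l by (simp add: mult.commute)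
          then show ?thesis unfolding scaled_cube_eq[OF kl] mem_box_cart using l by simp
        qed
        then have s: "s \<in> \<Lambda>" unfolding s_def using \<Lambda> kl t by blast
        have "integral (cbox 0 (l *\<^sub>R One)) (\<lambda>v. g (l *\<^sub>R (\<chi> i. real (f i)) + v)) = Q s x l"
          using Q_eq(1)[OF cL s l, of x] unfolding Q_def g_def s_def by (simp add: add.assoc)
        also have "\<dots> \<le> M" using Qs[OF s] M_def by simp
        finally show "integral (cbox 0 (l *\<^sub>R One)) (\<lambda>v. g (l *\<^sub>R (\<chi> i. real (f i)) + v)) \<le> M" .
      qed
      also have "\<dots> = real k ^ CARD('n) * M"
        by (simp add: card_PiE)
      finally have QL: "Q t x L \<le> real k ^ CARD('n) * M" .
      have "Q t x L powr (1/p) \<le> (real k ^ CARD('n) * M) powr (1/p)"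
        using QL Q0 p by (intro powr_mono2) auto
      also have "\<dots> = real k powr (N/p) * (l powr (N/p) * d)"
      proof -
        have "(real k ^ CARD('n)) powr (1/p) = real k powr (N/p)"
          using k by (simp add: N_def powr_realpow[symmetric] powr_powr)
        moreover have "M powr (1/p) = l powr (N/p) * d"
          unfolding M_def using p d0 by (simp add: powr_powr)
        ultimately show ?thesis using M0 by (simp add: powr_mult)
      qed
      finally have QL': "Q t x L powr (1/p) \<le> real k powr (N/p) * (l powr (N/p) * d)" .
      have "L powr (- N / p) * Q t x L powr (1/p) \<le> L powr (- N / p) * (real k powr (N/p) * (l powr (N/p) * d))"
        using QL' by (intro mult_left_mono) auto
      also have "\<dots> = (real k * l / L) powr (N / p) * d"
        using L l k by (simp add: powr_mult powr_divide powr_minus divide_simps)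
      finally have "L powr (- N / p) * Q t x L powr (1/p) \<le> (real k * l / L) powr (N / p) * d" .
      then show ?thesis
        unfolding Lp real N_def[symmetric]
        by (metis ennreal_le_iff ennreal_mult' ennreal_mult d0 mult_nonneg_nonneg powr_ge_zero)
    qed
  qed
qed


lemma ceil_k:
  assumes l: "l > 0" and L: "L > 0"
  shows "nat \<lceil>L / l\<rceil> \<ge> 1" "L \<le> real (nat \<lceil>L / l\<rceil>) * l"
    "real (nat \<lceil>L / l\<rceil>) * l \<le> L + l"
proof -
  have "L / l > 0" using l L by simp
  then show "nat \<lceil>L / l\<rceil> \<ge> 1" by linarith
  have e: "real (nat \<lceil>L / l\<rceil>) = \<lceil>L / l\<rceil>" using \<open>L / l > 0\<close> by simp
  have "L / l \<le> \<lceil>L / l\<rceil>" by (rule le_of_int_ceiling)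
  then show "L \<le> real (nat \<lceil>L / l\<rceil>) * l" unfolding e by (metis pos_divide_le_eq[OF l])
  have "\<lceil>L / l\<rceil> \<le> L / l + 1" by linarith
  then have "\<lceil>L / l\<rceil> * l \<le> (L / l + 1) * l" using l by (intro mult_right_mono) auto
  then show "real (nat \<lceil>L / l\<rceil>) * l \<le> L + l" unfolding e using l by (simp add: algebra_simps)
qed

lemma D_tendsto:
  fixes F :: "real^'n \<Rightarrow> 'x \<Rightarrow> 'y::real_normed_vector"
  assumes p: "p \<ge> 1" and \<Lambda>: "\<forall>l>0. \<forall>t\<in>\<Lambda>. \<forall>u\<in>scaled_cube l. t + u \<in> \<Lambda>"
    and cL: "cond_L p \<Lambda> F"
  shows "(D_weyl p \<Lambda> F B \<longlongrightarrow> (INF l\<in>{0<..}. D_weyl p \<Lambda> F B l)) at_top"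
proof (rule order_tendstoI)
  let ?D = "D_weyl p \<Lambda> F B"
  let ?I = "INF l\<in>{0<..}. ?D l"
  fix a assume a: "a < ?I"
  show "\<forall>\<^sub>F L in at_top. a < ?D L"
    unfolding eventually_at_top_linorder
  proof (intro exI allI impI)
    fix L :: real assume "L \<ge> 1"
    then have "?I \<le> ?D L" by (intro INF_lower) auto
    then show "a < ?D L" using a by simp
  qed
next
  let ?D = "D_weyl p \<Lambda> F B"
  let ?I = "INF l\<in>{0<..}. ?D l"
  define N where "N = real CARD('n)"
  fix b assume b: "?I < b"
  then obtain l where l: "l > 0" and lb: "?D l < b" by (auto simp: INF_less_iff)
  then obtain d where d: "?D l = ennreal d" "d \<ge> 0"
    by (cases "?D l") auto
  define r where "r L = real (nat \<lceil>L / l\<rceil>) * l / L" for L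
  have "(r \<longlongrightarrow> 1) at_top"
  proof (rule tendsto_sandwich[where f = "\<lambda>_. 1" and h = "\<lambda>L. 1 + l / L"])
    show "\<forall>\<^sub>F L in at_top. 1 \<le> r L"
      unfolding eventually_at_top_linorder r_def
      by (intro exI[of _ 1] allI impI) (use ceil_k[OF l] in \<open>simp add: le_divide_eq\<close>)
    show "\<forall>\<^sub>F L in at_top. r L \<le> 1 + l / L"
      unfolding eventually_at_top_linorder r_def
    proof (intro exI[of _ 1] allI impI)
      fix L :: real assume "L \<ge> 1"
      then have "L > 0" by simp
      then show "real (nat \<lceil>L / l\<rceil>) * l / L \<le> 1 + l / L"
      proof -
        have "real (nat \<lceil>L / l\<rceil>) * l / L \<le> (L + l) / L"
          using ceil_k(3)[OF l \<open>L > 0\<close>] \<open>L > 0\<close> by (intro divide_right_mono) auto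
        also have "(L + l) / L = 1 + l / L" using \<open>L > 0\<close> by (simp add: field_simps)
        finally show ?thesis .
      qed
    qed
    have "((\<lambda>L. l / L) \<longlongrightarrow> 0) at_top"
      by (rule tendsto_divide_0[OF tendsto_const filterlim_at_top_imp_at_infinity[OF filterlim_ident]])
    then show "((\<lambda>L. 1 + l / L) \<longlongrightarrow> 1) at_top"
      using tendsto_add[OF tendsto_const, of "\<lambda>L. l / L" 0 at_top 1] by simp
  qed simp
  then have "((\<lambda>L. r L powr (N / p)) \<longlongrightarrow> 1 powr (N / p)) at_top"
    by (intro tendsto_powr) auto
  then have "((\<lambda>L. r L powr (N / p) * d) \<longlongrightarrow> d) at_top"
    using tendsto_mult_right[of _ 1 at_top d] by simp
  then have "((\<lambda>L. ennreal (r L powr (N / p) * d)) \<longlongrightarrow> ennreal d) at_top"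
    by (rule tendsto_ennrealI)
  then have ev: "\<forall>\<^sub>F L in at_top. ennreal (r L powr (N / p) * d) < b"
    using lb d by (intro order_tendstoD(2)) auto
  have ev2: "\<forall>\<^sub>F L in at_top. ?D L \<le> ennreal (r L powr (N / p) * d)"
    unfolding eventually_at_top_linorder
  proof (intro exI[of _ 1] allI impI)
    fix L :: real assume "L \<ge> 1"
    then have L: "L > 0" by simp
    have "?D L \<le> ennreal ((real (nat \<lceil>L / l\<rceil>) * l / L) powr (real CARD('n) / p)) * ?D l"
      by (rule D_bound[OF p \<Lambda> cL l L ceil_k(1,2)[OF l L]])
    also have "\<dots> = ennreal (r L powr (N / p) * d)"
      unfolding d r_def N_def using d(2) by (simp add: ennreal_mult)
    finally show "?D L \<le> ennreal (r L powr (N / p) * d)" .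
  qed
  show "\<forall>\<^sub>F L in at_top. ?D L < b"
    using ev ev2 by eventually_elim auto
qed

theorem proposition3p3:
  fixes p :: real
    and \<B> :: "'x::banach set set"
    and \<Lambda> :: "(real^'n) set"
    and F :: "real^'n \<Rightarrow> 'x \<Rightarrow> 'y::banach"
  assumes "1 \<le> p"
    and "\<B> \<noteq> {}" and "\<Union>\<B> = UNIV"
    and "\<Lambda> \<noteq> {}"
    and "\<forall>l>0. \<forall>t\<in>\<Lambda>. \<forall>u\<in>scaled_cube l. t + u \<in> \<Lambda>"
    and "cond_L p \<Lambda> F"
  shows "weyl_bounded p \<Lambda> F \<B> \<longleftrightarrow> stepanov_bounded p \<Lambda> F \<B>"
proof -
  note p = assms(1) and \<Lambda> = assms(5) and cL = assms(6)
  have key: "weyl_norm p \<Lambda> F B < \<infinity> \<longleftrightarrow>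
      (SUP t\<in>\<Lambda>. SUP x\<in>B. ennreal (Lp_norm p unit_cube (\<lambda>u. F (t + u) x))) < \<infinity>" for B
  proof -
    let ?D = "D_weyl p \<Lambda> F B"
    have W: "weyl_norm p \<Lambda> F B = (INF l\<in>{0<..}. ?D l)"
      unfolding weyl_norm_def by (rule tendsto_Lim[OF _ D_tendsto[OF p \<Lambda> cL]]) simp
    have S: "(SUP t\<in>\<Lambda>. SUP x\<in>B. ennreal (Lp_norm p unit_cube (\<lambda>u. F (t + u) x))) = ?D 1"
      unfolding D_weyl_def scaled_cube_1 by (simp add: SUP_commute[of _ \<Lambda> B])
    show ?thesis unfolding W S
    proof
      assume "(INF l\<in>{0<..}. ?D l) < \<infinity>"
      then obtain l where l: "l > 0" and "?D l < \<infinity>" by (auto simp: INF_less_iff)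
      have "?D 1 \<le> ennreal ((real (nat \<lceil>1 / l\<rceil>) * l / 1) powr (real CARD('n) / p)) * ?D l"
        by (rule D_bound[OF p \<Lambda> cL l _ ceil_k(1,2)[OF l]]) simp_all
      also have "\<dots> < \<infinity>" using \<open>?D l < \<infinity>\<close> by (simp add: ennreal_mult_less_top)
      finally show "?D 1 < \<infinity>" .
    next
      assume "?D 1 < \<infinity>"
      moreover have "(INF l\<in>{0<..}. ?D l) \<le> ?D 1" by (intro INF_lower) auto
      ultimately show "(INF l\<in>{0<..}. ?D l) < \<infinity>" by simp
    qed
  qed
  show ?thesis unfolding weyl_bounded_def stepanov_bounded_def using key by simp
qed

end
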